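(* Let $k\ge2$ and $n\ge3$, and write $q=q_{n,k}$, $r=r_{n,k}$ and $N=N_{n,k}=\lfloor(k-1)(n-1)/k\rfloor$. Write $\mathcal{F}_{n,k}(x)=x^{r}P_{n,k}(x^k)$ with $P_{n,k}(\xi)\in\mathbb{Z}[\xi]$. Then $P_{n,k}$ is monic of degree $N$. Let $\xi_1,\dots,\xi_N$ be its roots counted with multiplicity, and let $\sigma_h$ denote their $h$-th elementary symmetric polynomial. Then $$\sigma_h(\xi_1,\dots,\xi_N)=(-1)^hC_k(n-h-1,h)\quad(h=1,\dots,N),$$ $$\sum_{j=1}^N\xi_j=-(n-2),\qquad\prod_{j=1}^N\xi_j=(-1)^N\binom{q+r}{r}.$$
   Context: For $k\ge2$ and $n\ge1$, the polynomials $\mathcal{F}_{n,k}(x)$ are defined by $\mathcal{F}_{1,k}=1$, $\mathcal{F}_{n,k}=0$ for $n=0,-1,\dots,-(k-2)$, and $\mathcal{F}_{n,k}(x)=x^{k-1}\mathcal{F}_{n-1,k}+\dots+\mathcal{F}_{n-k,k}$ for $n\ge2$. For $n>0$: $q_{n,k}=\lfloor(n-2)/k\rfloor$, and $r_{n,k}\in\{0,\dots,k-1\}$ is the residue of $(k-1)(n-1)$ modulo $k$. For integers $m\ge0$ and $j\ge0$, $C_k(m,j)$ is the coefficient of $x^j$ in $(1+x+\dots+x^{k-1})^m$. It is known (Hoggatt–Bicknell) that $\mathcal{F}_{n,k}(x)=\sum_{h\ge0}C_k(n-h-1,h)\,x^{(k-1)(n-1)-hk}$ for $n\ge1$. *)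

theory Defs
  imports "HOL-Computational_Algebra.Polynomial"
begin

text \<open>Values at indices n \<le> 0 are 0 (the paper's F_{0,k} = ... = F_{-(k-2),k} = 0),
  F_{1,k} = 1, and for n \<ge> 2,
  F_{n,k} = sum_{j=1..k} x^(k-j) F_{n-j,k}, where terms with n - j \<le> 0 vanish.\<close>
function kfib :: "nat \<Rightarrow> nat \<Rightarrow> int poly" where
  "kfib k n = (if n = 0 then 0 else if n = 1 then 1 else
      (\<Sum>j\<in>{1..k}. if j < n then monom 1 (k - j) * kfib k (n - j) else 0))"
  by auto
termination
  by (relation "measure snd") auto

definition q_nk :: "nat \<Rightarrow> nat \<Rightarrow> nat" where
  "q_nk n k = (n - 2) div k"

definition r_nk :: "nat \<Rightarrow> nat \<Rightarrow> nat" where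
  "r_nk n k = ((k - 1) * (n - 1)) mod k"

definition N_nk :: "nat \<Rightarrow> nat \<Rightarrow> nat" where
  "N_nk n k = ((k - 1) * (n - 1)) div k"

definition Ck :: "nat \<Rightarrow> nat \<Rightarrow> nat \<Rightarrow> nat" where
  "Ck k m j = coeff ((\<Sum>i<k. monom (1::nat) i) ^ m) j"

definition P_nk :: "nat \<Rightarrow> nat \<Rightarrow> int poly" where
  "P_nk n k = (THE P. kfib k n = monom 1 (r_nk n k) * pcompose P (monom 1 k))"

definition esym :: "nat \<Rightarrow> (nat \<Rightarrow> complex) \<Rightarrow> nat \<Rightarrow> complex" where
  "esym N \<xi> h = (\<Sum>S\<in>{S. S \<subseteq> {..<N} \<and> card S = h}. \<Prod>j\<in>S. \<xi> j)"

end

theory Submission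
  imports Defs
begin

definition Sk :: "nat \<Rightarrow> nat poly" where "Sk k = (\<Sum>i<k. monom 1 i)"

lemma Ck_Sk: "Ck k m j = coeff (Sk k ^ m) j"
  by (simp add: Ck_def Sk_def)

lemma coeff_Sk: "coeff (Sk k) i = (if i < k then 1 else 0)"
  by (simp add: Sk_def coeff_sum)

lemma Ck_0: "Ck k 0 h = (if h = 0 then 1 else 0)"
  by (simp add: Ck_Sk)

lemma Ck_at0: "k \<ge> 1 \<Longrightarrow> Ck k m 0 = 1"
  by (simp add: Ck_Sk coeff_0_power coeff_Sk)

lemma sum_if_filter: "(\<Sum>i\<in>A. if P i then f i else 0) = (\<Sum>i\<in>{i\<in>A. P i}. f i)" if "finite A"
  using that by (simp add: sum.inter_filter)

lemma Ck_rec: "Ck k (Suc m) h = (\<Sum>i<k. if i \<le> h then Ck k m (h-i) else 0)"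
proof -
  have "Ck k (Suc m) h = (\<Sum>i\<le>h. coeff (Sk k) i * Ck k m (h-i))"
    by (simp add: Ck_Sk coeff_mult)
  also have "\<dots> = (\<Sum>i\<le>h. if i < k then Ck k m (h-i) else 0)"
    by (rule sum.cong) (auto simp: coeff_Sk)
  also have "\<dots> = (\<Sum>i\<in>{i. i \<le> h \<and> i < k}. Ck k m (h-i))"
    by (subst sum_if_filter) auto
  also have "\<dots> = (\<Sum>i<k. if i \<le> h then Ck k m (h-i) else 0)"
    by (subst sum_if_filter) (auto intro!: sum.cong)
  finally show ?thesis .
qed

lemma degree_Sk: "degree (Sk k) \<le> k - 1"
  by (rule degree_le) (auto simp: coeff_Sk)

lemma Ck_high: "h > (k-1)*m \<Longrightarrow> Ck k m h = 0"
proof -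
  assume "h > (k-1)*m"
  moreover have "degree (Sk k ^ m) \<le> (k-1)*m"
    by (metis degree_Sk degree_power_le le_trans mult.commute mult_le_mono2)
  ultimately show ?thesis by (simp add: Ck_Sk coeff_eq_0)
qed

lemma Ck_1: "k \<ge> 2 \<Longrightarrow> Ck k m 1 = m"
proof (induction m)
  case 0 then show ?case by (simp add: Ck_0)
next
  case (Suc m)
  have "Ck k (Suc m) 1 = (\<Sum>i<k. if i \<le> 1 then Ck k m (1-i) else 0)"
    by (rule Ck_rec)
  also have "\<dots> = (\<Sum>i\<in>{i. i<k \<and> i \<le> 1}. Ck k m (1-i))"
    by (subst sum_if_filter) auto
  also have "{i. i<k \<and> i \<le> 1} = {0,1}" using Suc.prems by auto
  finally show ?case using Suc by (simp add: Ck_at0)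
qed

lemma Ck_low: "r < k \<Longrightarrow> Ck k (Suc m) r = (m + r) choose r"
proof (induction m arbitrary: r)
  case 0 then show ?case by (simp add: Ck_Sk coeff_Sk)
next
  case (Suc m)
  have "Ck k (Suc (Suc m)) r = (\<Sum>i<k. if i \<le> r then Ck k (Suc m) (r-i) else 0)"
    by (rule Ck_rec)
  also have "\<dots> = (\<Sum>i\<in>{i. i<k \<and> i \<le> r}. Ck k (Suc m) (r-i))"
    by (subst sum_if_filter) auto
  also have "{i. i<k \<and> i \<le> r} = {..r}" using Suc.prems by auto
  also have "(\<Sum>i\<le>r. Ck k (Suc m) (r-i)) = (\<Sum>i\<le>r. (m + (r-i)) choose (r-i))"
    using Suc by (intro sum.cong) auto
  also have "\<dots> = (\<Sum>i\<le>r. (m + i) choose i)"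
    by (rule sum.reindex_bij_witness[of _ "\<lambda>i. r - i" "\<lambda>i. r - i"]) auto
  also have "\<dots> = (Suc m + r) choose r" by (simp add: sum_choose_lower)
  finally show ?case .
qed

lemma Sk_ne: assumes "k \<ge> 1" shows "Sk k \<noteq> 0"
proof
  assume "Sk k = 0" hence "coeff (Sk k) 0 = 0" by simp
  thus False using assms by (simp add: coeff_Sk)
qed

lemma degree_Sk_eq: "k \<ge> 1 \<Longrightarrow> degree (Sk k) = k - 1"
  by (intro antisym degree_Sk le_degree) (simp add: coeff_Sk)

lemma reflect_Sk: "k \<ge> 1 \<Longrightarrow> reflect_poly (Sk k) = Sk k"
  by (rule poly_eqI) (auto simp: coeff_reflect_poly degree_Sk_eq coeff_Sk)

lemma degree_Sk_pow: "k \<ge> 1 \<Longrightarrow> degree (Sk k ^ m) = (k-1)*m"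
proof (induction m)
  case (Suc m)
  have ne: "Sk k \<noteq> 0" using Suc.prems by (rule Sk_ne)
  then have "Sk k ^ m \<noteq> 0" by (simp add: power_not_zero)
  then show ?case using Suc ne by (simp add: degree_mult_eq degree_Sk_eq)
qed simp

lemma Ck_sym: assumes "k \<ge> 1" "j \<le> (k-1)*m" shows "Ck k m j = Ck k m ((k-1)*m - j)"
proof -
  have d: "degree (Sk k ^ m) = (k-1)*m" using assms(1) by (rule degree_Sk_pow)
  have "reflect_poly (Sk k ^ m) = Sk k ^ m" using assms by (simp add: reflect_poly_power reflect_Sk)
  then have "coeff (Sk k ^ m) j = coeff (reflect_poly (Sk k ^ m)) j" by simp
  also have "\<dots> = coeff (Sk k ^ m) ((k-1)*m - j)" using assms d by (simp add: coeff_reflect_poly)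
  finally show ?thesis by (simp add: Ck_Sk)
qed


definition Hk :: "nat \<Rightarrow> nat \<Rightarrow> int poly" where
  "Hk k n = (\<Sum>h<n. monom (int (Ck k (n-h-1) h)) h)"

lemma coeff_Hk: "n \<ge> 1 \<Longrightarrow> coeff (Hk k n) h = int (Ck k (n-h-1) h)"
  by (auto simp: Hk_def coeff_sum coeff_monom Ck_0)

lemma Hk_rec:
  assumes "n \<ge> 2"
  shows "Hk k n = (\<Sum>j\<in>{1..k}. if j < n then monom 1 (j-1) * Hk k (n-j) else 0)"
proof (rule poly_eqI)
  fix h
  have "coeff (\<Sum>j\<in>{1..k}. if j < n then monom 1 (j-1) * Hk k (n-j) else 0) h
      = (\<Sum>j\<in>{1..k}. if j < n \<and> j - 1 \<le> h then int (Ck k (n-j-(h-(j-1))-1) (h-(j-1))) else 0)"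
    unfolding coeff_sum by (intro sum.cong) (auto simp: coeff_monom_mult coeff_Hk)
  also have "\<dots> = (\<Sum>i<k. if Suc i < n \<and> i \<le> h then int (Ck k (n-Suc i-(h-i)-1) (h-i)) else 0)"
    by (rule sum.reindex_bij_witness[of _ Suc "\<lambda>j. j - 1"]) auto
  also have "\<dots> = int (Ck k (n-h-1) h)"
  proof (cases "h + 2 \<le> n")
    case True
    define m where "m = n - h - 2"
    have m: "n - h - 1 = Suc m" "m = n - h - 2" using True by (simp_all add: m_def)
    have "int (Ck k (n-h-1) h) = int (\<Sum>i<k. if i \<le> h then Ck k m (h-i) else 0)"
      using m(1) Ck_rec by simp
    also have "\<dots> = (\<Sum>i<k. if Suc i < n \<and> i \<le> h then int (Ck k (n-Suc i-(h-i)-1) (h-i)) else 0)"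
      unfolding of_nat_sum using True m(2) by (intro sum.cong) auto
    finally show ?thesis by simp
  next
    case False
    then have "n - h - 1 = 0" by simp
    moreover have "h \<ge> 1" using False assms by simp
    ultimately have l: "Ck k (n-h-1) h = 0" by (simp add: Ck_0)
    have "(\<Sum>i<k. if Suc i < n \<and> i \<le> h then int (Ck k (n-Suc i-(h-i)-1) (h-i)) else 0) = 0"
      using False by (intro sum.neutral) (auto simp: Ck_0)
    then show ?thesis using l by simp
  qed
  also have "\<dots> = coeff (Hk k n) h" using assms by (simp add: coeff_Hk)
  finally show "coeff (Hk k n) h = coeff (\<Sum>j\<in>{1..k}. if j < n then monom 1 (j-1) * Hk k (n-j) else 0) h" ..
qed

definition rv :: "nat \<Rightarrow> int poly \<Rightarrow> int poly" where
  "rv D p = (\<Sum>i\<le>D. monom (coeff p i) (D-i))"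

lemma coeff_rv: "coeff (rv D p) e = (if e \<le> D then coeff p (D-e) else 0)"
proof (cases "e \<le> D")
  case True
  have "coeff (rv D p) e = (\<Sum>i\<le>D. if i = D - e then coeff p i else 0)"
    unfolding rv_def coeff_sum using True by (intro sum.cong) (auto simp: coeff_monom)
  also have "\<dots> = coeff p (D-e)" by simp
  finally show ?thesis using True by simp
next
  case False
  have "coeff (rv D p) e = 0"
    unfolding rv_def coeff_sum coeff_monom using False by (intro sum.neutral) auto
  then show ?thesis using False by simp
qed

lemma rv_shift:
  assumes "degree p \<le> D"
  shows "monom 1 a * rv D p = rv (D+a+b) (monom 1 b * p)"
proof (rule poly_eqI)
  fix e
  show "coeff (monom 1 a * rv D p) e = coeff (rv (D+a+b) (monom 1 b * p)) e"
    using assms by (auto simp: coeff_monom_mult coeff_rv intro!: coeff_eq_0)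
qed

lemma rv_0[simp]: "rv D 0 = 0"
  by (simp add: rv_def)

lemma rv_sum: "rv D (sum f A) = (\<Sum>i\<in>A. rv D (f i))"
  by (rule poly_eqI) (simp add: coeff_rv coeff_sum)

lemma rv_monom: "i \<le> D \<Longrightarrow> rv D (monom c i) = monom c (D - i)"
  by (rule poly_eqI) (auto simp: coeff_rv coeff_monom)

lemma pcompose_monom_X: "pcompose (monom (c::int) i) (monom 1 k) = monom c (k*i)"
proof (induction i)
  case 0 then show ?case by (simp add: monom_0)
next
  case (Suc i)
  then show ?case by (simp add: monom_Suc pcompose_pCons mult_monom)
qed

lemma div_bound: "(k::nat) > 0 \<Longrightarrow> i > E div k \<Longrightarrow> i * k > E"
proof -
  assume k: "k > 0" and i: "i > E div k"
  have "(E div k + 1) * k \<le> i * k" using i by (intro mult_le_mono1) simp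
  moreover have "E div k * k + E mod k = E" by (rule div_mult_mod_eq)
  moreover have "E mod k < k" using k by simp
  moreover have "(E div k + 1) * k = E div k * k + k" by (simp add: algebra_simps)
  ultimately show ?thesis by linarith
qed

lemma arith1: "(i::nat) * k > (k-1)*(n-1) \<Longrightarrow> i > (k-1)*(n-i-1)"
proof (cases "i + 1 \<le> n")
  case True
  define m where "m = n - i - 1"
  have m: "n - 1 = m + i" "n - i - 1 = m" using True by (simp_all add: m_def)
  assume "i * k > (k-1)*(n-1)"
  moreover have "(k-1)*(n-1) = (k-1)*m + (k-1)*i" using m(1) by (simp add: distrib_left)
  moreover have "k > 0" using \<open>i * k > (k-1)*(n-1)\<close> by (cases k) auto
  then have "i * k = (k-1)*i + i" by (cases k) (auto simp: algebra_simps)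
  ultimately show ?thesis unfolding m(2) by linarith
next
  case False
  assume "i * k > (k-1)*(n-1)"
  then have "i > 0" by (cases i) auto
  then show ?thesis using False by simp
qed

lemma degree_Hk: assumes "k \<ge> 1" "n \<ge> 1" shows "degree (Hk k n) \<le> ((k-1)*(n-1)) div k"
proof (rule degree_le, intro allI impI)
  fix i assume "((k-1)*(n-1)) div k < i"
  then have "i * k > (k-1)*(n-1)" using assms by (intro div_bound) auto
  then have "i > (k-1)*(n-i-1)" by (rule arith1)
  then show "coeff (Hk k n) i = 0" using assms by (simp add: coeff_Hk Ck_high)
qed

lemma degree_Hk_comp: assumes "k \<ge> 1" "n \<ge> 1"
  shows "degree (pcompose (Hk k n) (monom 1 k)) \<le> (k-1)*(n-1)"
proof -
  have "degree (pcompose (Hk k n) (monom 1 k)) = degree (Hk k n) * k"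
    by (simp add: degree_pcompose degree_monom_eq)
  also have "\<dots> \<le> ((k-1)*(n-1)) div k * k" using degree_Hk[OF assms] by (rule mult_le_mono1)
  also have "\<dots> \<le> (k-1)*(n-1)" by simp
  finally show ?thesis .
qed


lemma kfib_rv:
  assumes k: "k \<ge> 1"
  shows "n \<ge> 1 \<Longrightarrow> kfib k n = rv ((k-1)*(n-1)) (pcompose (Hk k n) (monom 1 k))"
proof (induction n rule: less_induct)
  case (less n)
  show ?case
  proof (cases "n = 1")
    case True
    have "kfib k 1 = 1" by (subst kfib.simps) simp
    moreover have "Hk k 1 = 1" by (simp add: Hk_def Ck_0)
    moreover have "rv 0 1 = 1" by (rule poly_eqI) (simp add: coeff_rv coeff_1)
    moreover have "pcompose (1::int poly) (monom 1 k) = 1"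
      using pcompose_const[of "1::int" "monom 1 k"] by (simp add: one_pCons)
    ultimately show ?thesis using True by simp
  next
    case False
    then have n2: "n \<ge> 2" using less.prems by simp
    define E where "E = (k-1)*(n-1)"
    have "kfib k n = (\<Sum>j\<in>{1..k}. if j < n then monom 1 (k-j) * kfib k (n-j) else 0)"
      using n2 by (subst kfib.simps) simp
    also have "\<dots> = (\<Sum>j\<in>{1..k}. rv E (if j < n then monom 1 (k*(j-1)) * pcompose (Hk k (n-j)) (monom 1 k) else 0))"
    proof (rule sum.cong[OF refl])
      fix j assume j: "j \<in> {1..k}"
      show "(if j < n then monom 1 (k-j) * kfib k (n-j) else 0) = rv E (if j < n then monom 1 (k*(j-1)) * pcompose (Hk k (n-j)) (monom 1 k) else 0)"
      proof (cases "j < n")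
        case True
        have IH: "kfib k (n-j) = rv ((k-1)*(n-j-1)) (pcompose (Hk k (n-j)) (monom 1 k))"
          using less.IH[of "n-j"] True j by auto
        have eq: "(k-1)*(n-j-1) + (k-j) + k*(j-1) = E"
        proof -
          obtain a where a: "j = Suc a" using j by (cases j) auto
          obtain b where b: "k = j + b" using j by (auto simp: le_iff_add)
          obtain c where c: "n = Suc (j + c)" using True less_imp_Suc_add by blast
          show ?thesis unfolding E_def c b a by (simp add: algebra_simps)
        qed
        have "monom 1 (k-j) * kfib k (n-j) = rv E (monom 1 (k*(j-1)) * pcompose (Hk k (n-j)) (monom 1 k))"
          unfolding IH eq[symmetric] by (rule rv_shift, rule degree_Hk_comp) (use k True in auto)
        then show ?thesis using True by simp
      qed simp
    qed
    also have "\<dots> = rv E (\<Sum>j\<in>{1..k}. if j < n then monom 1 (k*(j-1)) * pcompose (Hk k (n-j)) (monom 1 k) else 0)"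
      by (simp add: rv_sum)
    also have "(\<Sum>j\<in>{1..k}. if j < n then monom 1 (k*(j-1)) * pcompose (Hk k (n-j)) (monom 1 k) else 0) = pcompose (Hk k n) (monom 1 k)"
      unfolding Hk_rec[OF n2] pcompose_sum by (intro sum.cong) (auto simp: pcompose_mult pcompose_monom_X)
    finally show ?thesis by (simp add: E_def)
  qed
qed

lemma pcompose_rv:
  assumes "degree p \<le> N"
  shows "pcompose (rv N p) (monom 1 k) = rv (N*k) (pcompose p (monom 1 k))"
proof -
  have "pcompose (rv N p) (monom 1 k) = (\<Sum>i\<le>N. monom (coeff p i) (k*(N-i)))"
    unfolding rv_def pcompose_sum by (simp add: pcompose_monom_X)
  also have "\<dots> = (\<Sum>i\<le>N. rv (N*k) (monom (coeff p i) (k*i)))"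
    by (intro sum.cong) (auto simp: rv_monom diff_mult_distrib2 mult.commute)
  also have "\<dots> = rv (N*k) (\<Sum>i\<le>N. monom (coeff p i) (k*i))"
    by (simp add: rv_sum)
  also have "(\<Sum>i\<le>N. monom (coeff p i) (k*i)) = pcompose (\<Sum>i\<le>N. monom (coeff p i) i) (monom 1 k)"
    by (simp add: pcompose_sum pcompose_monom_X)
  also have "(\<Sum>i\<le>N. monom (coeff p i) i) = p" using assms by (rule poly_as_sum_of_monoms')
  finally show ?thesis .
qed

lemma kfib_P:
  assumes "k \<ge> 1" "n \<ge> 1"
  shows "kfib k n = monom 1 (r_nk n k) * pcompose (rv (N_nk n k) (Hk k n)) (monom 1 k)"
proof -
  define N where "N = N_nk n k"
  define r where "r = r_nk n k"
  have E: "(k-1)*(n-1) = N*k + r" unfolding N_def r_def N_nk_def r_nk_def by simp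
  have dH: "degree (Hk k n) \<le> N" unfolding N_def N_nk_def using assms by (rule degree_Hk)
  have dq: "degree (pcompose (Hk k n) (monom 1 k)) \<le> N*k"
    using dH by (simp add: degree_pcompose degree_monom_eq)
  have "monom 1 r * pcompose (rv N (Hk k n)) (monom 1 k) = monom 1 r * rv (N*k) (pcompose (Hk k n) (monom 1 k))"
    using dH by (simp add: pcompose_rv)
  also have "\<dots> = rv (N*k + r + 0) (monom 1 0 * pcompose (Hk k n) (monom 1 k))"
    using dq by (rule rv_shift)
  also have "\<dots> = kfib k n" using kfib_rv[OF assms(1) assms(2)] E by simp
  finally show ?thesis unfolding N_def r_def ..
qed


lemma neg1_pow_poly: "(-1::'a::comm_ring_1 poly)^c = [:(-1)^c:]"
  by (induction c) (auto simp: one_pCons)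

lemma lin_eq: "[:- a, 1:] = monom 1 1 - [:a::'a::comm_ring_1:]"
  by (rule poly_eqI) (auto simp: coeff_monom coeff_pCons split: nat.split)

lemma vieta:
  assumes "h \<le> N"
  shows "coeff (\<Prod>j<N. [:- \<xi> j, 1:]) (N - h) = (-1)^h * esym N \<xi> h"
proof -
  let ?A = "{..<N}"
  have "(\<Prod>j<N. [:- \<xi> j, 1:]) = (\<Prod>j<N. monom 1 1 - [:\<xi> j:])" by (simp add: lin_eq)
  also have "\<dots> = (\<Sum>X\<in>Pow ?A. (-1) ^ card X * (\<Prod>j\<in>X. [:\<xi> j:]) * (\<Prod>j\<in>?A-X. monom 1 1))"
    by (rule prod_diff_conv_sum) simp
  also have "\<dots> = (\<Sum>X\<in>Pow ?A. monom ((-1) ^ card X * (\<Prod>j\<in>X. \<xi> j)) (N - card X))"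
  proof (rule sum.cong[OF refl])
    fix X assume X: "X \<in> Pow ?A"
    then have c: "card (?A - X) = N - card X" by (subst card_Diff_subset) (auto intro: finite_subset)
    show "(-1) ^ card X * (\<Prod>j\<in>X. [:\<xi> j:]) * (\<Prod>j\<in>?A-X. monom 1 1) = monom ((-1) ^ card X * (\<Prod>j\<in>X. \<xi> j)) (N - card X)"
      by (simp add: c neg1_pow_poly prod_to_poly monom_power smult_monom)
  qed
  finally have "coeff (\<Prod>j<N. [:- \<xi> j, 1:]) (N - h) = (\<Sum>X\<in>Pow ?A. if card X = h then (-1) ^ h * (\<Prod>j\<in>X. \<xi> j) else 0)"
  proof (simp only: coeff_sum, intro sum.cong refl)
    fix X assume X: "X \<in> Pow ?A"
    then have "card X \<le> N" by (metis PowD card_lessThan card_mono finite_lessThan)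
    then show "coeff (monom ((-1) ^ card X * (\<Prod>j\<in>X. \<xi> j)) (N - card X)) (N - h) = (if card X = h then (-1) ^ h * (\<Prod>j\<in>X. \<xi> j) else 0)"
      using assms by (auto simp: coeff_monom)
  qed
  also have "\<dots> = (\<Sum>X\<in>{X\<in>Pow ?A. card X = h}. (-1) ^ h * (\<Prod>j\<in>X. \<xi> j))"
    by (subst sum_if_filter) auto
  also have "\<dots> = (-1)^h * esym N \<xi> h"
    unfolding esym_def sum_distrib_left by (intro sum.cong) auto
  finally show ?thesis .
qed




lemma arith_main:
  assumes k: "k \<ge> 2" and n: "n \<ge> 3"
  shows "N_nk n k = n - 2 - q_nk n k" "n - N_nk n k - 1 = Suc (q_nk n k)"
    "N_nk n k + r_nk n k = (k-1) * Suc (q_nk n k)" "N_nk n k \<ge> 1" "r_nk n k < k"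
proof -
  define q where "q = (n-2) div k"
  define s where "s = (n-2) mod k"
  have nq: "n - 2 = q*k + s" unfolding q_def s_def by simp
  have sk: "s < k" unfolding s_def using k by simp
  obtain t where t: "k = s + t + 1" using sk by (metis add.commute add_Suc_right less_imp_Suc_add plus_1_eq_Suc)
  have n': "n = q*k + s + 2" using nq n by simp
  have key: "(k-1)*(n-1) = (n-2-q)*k + (k-1-s)"
    unfolding n' t by (simp add: algebra_simps)
  have r: "r_nk n k = k-1-s" unfolding r_nk_def key using k by simp
  have N: "N_nk n k = n-2-q" unfolding N_nk_def key using k by simp
  have qlt: "q < n - 2" unfolding q_def using k n by (intro div_less_dividend) auto
  show "N_nk n k = n - 2 - q_nk n k" using N by (simp add: q_nk_def q_def)
  show "n - N_nk n k - 1 = Suc (q_nk n k)" using N qlt n by (simp add: q_nk_def q_def)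
  show "N_nk n k \<ge> 1" using N qlt by simp
  show "r_nk n k < k" using r k by simp
  show "N_nk n k + r_nk n k = (k-1) * Suc (q_nk n k)"
  proof -
    have "N_nk n k + r_nk n k = (n-2-q) + (k-1-s)" using N r by simp
    also have "\<dots> = (k-1) * Suc q" unfolding n' t by (simp add: algebra_simps)
    finally show ?thesis by (simp add: q_nk_def q_def)
  qed
qed


lemma esym_1: "esym N \<xi> 1 = (\<Sum>j<N. \<xi> j)"
proof -
  have "{S. S \<subseteq> {..<N} \<and> card S = 1} = (\<lambda>j. {j}) ` {..<N}"
    by (auto simp: card_1_singleton_iff)
  then show ?thesis unfolding esym_def by (simp add: sum.reindex)
qed

lemma esym_N: "esym N \<xi> N = (\<Prod>j<N. \<xi> j)"
proof -
  have e: "S \<subseteq> {..<N} \<and> card S = N \<longleftrightarrow> S = {..<N}" for S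
    using card_subset_eq[of "{..<N}" S] by auto
  have "{S. S \<subseteq> {..<N} \<and> card S = N} = {{..<N}}"
    using e by blast
  then show ?thesis unfolding esym_def by simp
qed

theorem mainTheorem17:
  fixes n k :: nat
  assumes "k \<ge> 2" and "n \<ge> 3"
  shows "(\<exists>!P. kfib k n = monom 1 (r_nk n k) * pcompose P (monom 1 k))
    \<and> lead_coeff (P_nk n k) = 1 \<and> degree (P_nk n k) = N_nk n k
    \<and> (\<forall>\<xi> :: nat \<Rightarrow> complex.
         map_poly of_int (P_nk n k) = (\<Prod>j<N_nk n k. [:- \<xi> j, 1:]) \<longrightarrow>
           (\<forall>h\<in>{1..N_nk n k}. esym (N_nk n k) \<xi> h = (-1) ^ h * of_nat (Ck k (n - h - 1) h))
         \<and> (\<Sum>j<N_nk n k. \<xi> j) = - of_nat (n - 2)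
         \<and> (\<Prod>j<N_nk n k. \<xi> j) = (-1) ^ N_nk n k * of_nat ((q_nk n k + r_nk n k) choose r_nk n k))"
proof -
  define N where "N = N_nk n k"
  define r where "r = r_nk n k"
  define q where "q = q_nk n k"
  define P0 where "P0 = rv N (Hk k n)"
  have k1: "k \<ge> 1" "n \<ge> 1" using assms by auto
  note ar = arith_main[OF assms, folded N_def r_def q_def]
  have kP: "kfib k n = monom 1 r * pcompose P0 (monom 1 k)"
    unfolding P0_def N_def r_def by (rule kfib_P[OF k1])
  have uniq: "Q = P0" if "kfib k n = monom 1 r * pcompose Q (monom 1 k)" for Q
  proof -
    have "monom 1 r * pcompose Q (monom 1 k) = monom 1 r * pcompose P0 (monom 1 k)"
      using that kP by simp
    then have "pcompose Q (monom 1 k) = pcompose P0 (monom 1 k)" by simp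
    then have "pcompose (Q - P0) (monom 1 k) = 0" by (simp add: pcompose_diff)
    then have "Q - P0 = 0" by (rule pcompose_eq_0) (use k1 in \<open>simp add: degree_monom_eq\<close>)
    then show ?thesis by simp
  qed
  have ex1: "\<exists>!P. kfib k n = monom 1 r * pcompose P (monom 1 k)"
    using kP uniq by blast
  have PP: "P_nk n k = P0"
    unfolding P_nk_def r_def[symmetric] using kP uniq by (intro the_equality) auto
  have cP: "coeff P0 (N - h) = int (Ck k (n-h-1) h)" if "h \<le> N" for h
    using that k1 by (simp add: P0_def coeff_rv coeff_Hk)
  have lc: "coeff P0 N = 1" using cP[of 0] k1 by (simp add: Ck_at0)
  have dP: "degree P0 = N"
  proof (rule antisym)
    show "degree P0 \<le> N" by (rule degree_le) (simp add: P0_def coeff_rv)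
    show "N \<le> degree P0" using lc by (intro le_degree) simp
  qed
  have roots: "esym N \<xi> h = (-1) ^ h * of_nat (Ck k (n - h - 1) h)"
    if eq: "map_poly of_int P0 = (\<Prod>j<N. [:- \<xi> j, 1:])" and h: "h \<le> N" for \<xi> :: "nat \<Rightarrow> complex" and h
  proof -
    have "(-1)^h * esym N \<xi> h = coeff (\<Prod>j<N. [:- \<xi> j, 1:]) (N - h)" using h by (simp add: vieta)
    also have "\<dots> = of_int (coeff P0 (N - h))" unfolding eq[symmetric] by (simp add: coeff_map_poly)
    also have "\<dots> = of_nat (Ck k (n - h - 1) h)" using cP[OF h] by simp
    finally have "(-1)^h * ((-1)^h * esym N \<xi> h) = (-1)^h * of_nat (Ck k (n - h - 1) h)" by simp
    then show ?thesis by (simp add: power_mult_distrib[symmetric] mult.assoc[symmetric])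
  qed
  have part3: "(\<forall>h\<in>{1..N}. esym N \<xi> h = (-1) ^ h * of_nat (Ck k (n - h - 1) h))
         \<and> (\<Sum>j<N. \<xi> j) = - of_nat (n - 2)
         \<and> (\<Prod>j<N. \<xi> j) = (-1) ^ N * of_nat ((q + r) choose r)"
    if eq: "map_poly of_int P0 = (\<Prod>j<N. [:- \<xi> j, 1:])" for \<xi> :: "nat \<Rightarrow> complex"
  proof (intro conjI)
    show "\<forall>h\<in>{1..N}. esym N \<xi> h = (-1) ^ h * of_nat (Ck k (n - h - 1) h)"
      using roots[OF eq] by auto
    have "(\<Sum>j<N. \<xi> j) = esym N \<xi> 1" by (rule esym_1[symmetric])
    also have "\<dots> = - of_nat (Ck k (n - 2) 1)" using roots[OF eq, of 1] ar(4) by (simp add: numeral_2_eq_2)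
    also have "\<dots> = - of_nat (n - 2)" using Ck_1[OF assms(1), of "n-2"] by (simp only:)
    finally show "(\<Sum>j<N. \<xi> j) = - of_nat (n - 2)" .
    have "(\<Prod>j<N. \<xi> j) = esym N \<xi> N" by (simp add: esym_N)
    also have "\<dots> = (-1)^N * of_nat (Ck k (Suc q) N)" using roots[OF eq, of N] ar(2) by simp
    also have "Ck k (Suc q) N = Ck k (Suc q) r"
    proof -
      have "N = (k-1) * Suc q - r" using ar(3) by simp
      moreover have "r \<le> (k-1) * Suc q" using ar(3) by simp
      ultimately show ?thesis using Ck_sym[of k r "Suc q"] k1 by simp
    qed
    also have "\<dots> = (q + r) choose r" using ar(5) by (rule Ck_low)
    finally show "(\<Prod>j<N. \<xi> j) = (-1) ^ N * of_nat ((q + r) choose r)" .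
  qed
  show ?thesis
    unfolding N_def[symmetric] r_def[symmetric] q_def[symmetric] PP
    using ex1 lc dP part3 by simp
qed

end
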